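(* Let $r>0$ and $\sigma>0$, set $k=\frac{2r}{\sigma^2}$, and let $\widetilde{\widetilde{C}}_0:\mathbb{R}\to\mathbb{R}$ be $$\widetilde{\widetilde{C}}_0(x)=\max\left\{e^{\frac{(k+1)x}{2}}-e^{\frac{(k-1)x}{2}},\,0\right\}.$$ Fix $S_0\ge 0$, a positive integer $N_0$, and $\epsilon\in\{-1,1\}$. For $\lambda>0$ define the function $$\mathcal{F}\left(\widetilde{\widetilde{C}}_0,\lambda,N_0\right)(x)=\widetilde{\widetilde{C}}_0(x)+\epsilon\sum_{j=1}^{N_0}\lambda^{-j}\,\widetilde{\widetilde{C}}_0\left(\lambda^{-j}x\right).$$ Then $$\left\|\mathcal{F}\left(\widetilde{\widetilde{C}}_0,\lambda,N_0\right)-\widetilde{\widetilde{C}}_0\right\|^2_{L^2([0,S_0])}\longrightarrow 0\quad\text{as }\lambda\to+\infty,$$ i.e. for every $\varepsilon>0$ there exists $\lambda_0>0$ such that for all $\lambda\ge\lambda_0$ this squared norm is at most $\varepsilon$.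
   Context: $\widetilde{\widetilde{C}}_0$ is the initial datum obtained from the Black–Scholes call payoff after the standard change of variables $x=\ln(S/E)$ transforming the Black–Scholes equation into the heat equation; $r$ is the risk-free rate and $\sigma$ the volatility. $L^2([0,S_0])$ is the usual Lebesgue space on the interval $[0,S_0]$. *)

theory Defs
  imports "HOL-Analysis.Analysis"
begin

definition Ctt0 :: "real \<Rightarrow> real \<Rightarrow> real \<Rightarrow> real" where
  "Ctt0 r \<sigma> x = (let k = 2 * r / \<sigma>^2 in
      max (exp ((k + 1) * x / 2) - exp ((k - 1) * x / 2)) 0)"

definition FF :: "(real \<Rightarrow> real) \<Rightarrow> real \<Rightarrow> nat \<Rightarrow> real \<Rightarrow> real \<Rightarrow> real" where
  "FF C lam N0 \<epsilon> x = C x + \<epsilon> * (\<Sum>j=1..N0. (lam powi (- int j)) * C ((lam powi (- int j)) * x))"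

definition L2_norm_sq_on :: "real \<Rightarrow> (real \<Rightarrow> real) \<Rightarrow> real" where
  "L2_norm_sq_on S0 f = (LINT x:{0..S0}|lborel. (f x)^2)"

end

theory Submission imports Defs begin
lemma L: fixes f :: "real\<Rightarrow>real" assumes "S0\<ge>0" "\<And>x. x\<in>{0..S0} \<Longrightarrow> f x ^2 \<le> B"
  shows "L2_norm_sq_on S0 f \<le> S0*B"
proof -
  have B: "B \<ge> 0" using assms(2)[of 0] assms(1) by (smt (verit) atLeastAtMost_iff zero_le_power2)
  have ci: "set_integrable lborel {0..S0} (\<lambda>_. B)"
    unfolding set_integrable_def by (intro integrable_scaleR_left integrable_real_indicator) (auto simp: emeasure_lborel_Icc_eq)
  have cv: "(LINT x:{0..S0}|lborel. B) = S0*B" 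
    using assms(1) by (simp add: set_lebesgue_integral_def)
  show ?thesis
  proof (cases "set_integrable lborel {0..S0} (\<lambda>x. (f x)^2)")
    case True
    then have "(LINT x:{0..S0}|lborel. (f x)^2) \<le> (LINT x:{0..S0}|lborel. B)"
      using ci assms(2) by (intro set_integral_mono) auto
    then show ?thesis using cv by (simp add: L2_norm_sq_on_def)
  next
    case False
    then have "(LINT x:{0..S0}|lborel. (f x)^2) = 0"
      unfolding set_lebesgue_integral_def set_integrable_def by (simp add: not_integrable_integral_eq)
    then show ?thesis using B assms(1) by (simp add: L2_norm_sq_on_def)
  qed
qed
lemma C_bounds: assumes "r>0" "\<sigma>>0" "0\<le>y" "y\<le>S0"
  shows "0 \<le> Ctt0 r \<sigma> y \<and> Ctt0 r \<sigma> y \<le> exp ((2*r/\<sigma>^2 + 1) * S0 / 2)"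
proof -
  have k: "2*r/\<sigma>^2 + 1 > 0" using assms by (simp add: add_pos_nonneg)
  have "exp ((2*r/\<sigma>^2 + 1) * y / 2) \<le> exp ((2*r/\<sigma>^2 + 1) * S0 / 2)"
    using k assms by (simp add: divide_right_mono mult_left_mono)
  moreover have "exp ((2*r/\<sigma>^2 - 1) * y / 2) > 0" by simp
  ultimately have a: "exp ((2*r/\<sigma>^2 + 1) * y / 2) - exp ((2*r/\<sigma>^2 - 1) * y / 2) \<le> exp ((2*r/\<sigma>^2 + 1) * S0 / 2)" by linarith
  have e: "Ctt0 r \<sigma> y = max (exp ((2*r/\<sigma>^2 + 1) * y / 2) - exp ((2*r/\<sigma>^2 - 1) * y / 2)) 0"
    by (simp add: Ctt0_def Let_def)
  show ?thesis unfolding e using a by (intro conjI max.cobounded2 max.boundedI) auto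
qed

lemma term_bound: assumes "r>0" "\<sigma>>0" "0\<le>x" "x\<le>S0" "lam \<ge> 1" "j \<ge> 1"
  shows "0 \<le> lam powi (- int j) * Ctt0 r \<sigma> (lam powi (- int j) * x) \<and>
     lam powi (- int j) * Ctt0 r \<sigma> (lam powi (- int j) * x) \<le> exp ((2*r/\<sigma>^2 + 1) * S0 / 2) / lam"
proof -
  define t where "t = lam powi (- int j)"
  have t: "t = inverse (lam ^ j)" unfolding t_def by (simp add: power_int_minus)
  have lj: "lam \<le> lam ^ j" using assms(5,6) by (metis One_nat_def power_increasing power_one_right)
  have t0: "0 < t" using t assms by simp
  have tl: "t * lam \<le> t * lam ^ j" using t0 lj by (intro mult_left_mono) auto
  have "t * lam ^ j = 1" using t assms(5) by simp
  then have "t * lam \<le> 1" using tl by linarith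
  then have t1: "t \<le> 1 / lam" using assms(5) by (simp add: pos_le_divide_eq)
  have t2: "1/lam \<le> 1" using assms(5) by simp
  have tx0: "0 \<le> t*x" using t0 assms(3) by simp
  have "t*x \<le> 1*x" using t1 t2 assms(3) by (intro mult_right_mono) auto
  then have tx: "0 \<le> t*x" "t*x \<le> S0" using tx0 assms(4) by auto
  from C_bounds[OF assms(1,2) tx] have cb: "0 \<le> Ctt0 r \<sigma> (t*x)" "Ctt0 r \<sigma> (t*x) \<le> exp ((2*r/\<sigma>^2 + 1) * S0 / 2)" by auto
  have "t * Ctt0 r \<sigma> (t*x) \<le> (1/lam) * exp ((2*r/\<sigma>^2 + 1) * S0 / 2)"
    using cb t0 t1 assms(5) by (intro mult_mono) auto
  then show ?thesis using cb t0 unfolding t_def[symmetric] by simp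
qed

theorem proposition1:
  fixes r \<sigma> S0 \<epsilon> :: real and N0 :: nat
  assumes "r > 0" and "\<sigma> > 0" and "S0 \<ge> 0" and "N0 \<ge> 1"
    and "\<epsilon> \<in> {-1, 1}"
  shows "\<forall>e>0. \<exists>lam0>0. \<forall>lam\<ge>lam0.
     L2_norm_sq_on S0 (\<lambda>x. FF (Ctt0 r \<sigma>) lam N0 \<epsilon> x - Ctt0 r \<sigma> x) \<le> e"
proof (intro allI impI)
  fix e :: real assume e: "e > 0"
  define M where "M = exp ((2*r/\<sigma>^2 + 1) * S0 / 2)"
  define A where "A = S0 * (real N0 * M)^2"
  have A0: "A \<ge> 0" unfolding A_def using assms(3) by simp
  show "\<exists>lam0>0. \<forall>lam\<ge>lam0.
     L2_norm_sq_on S0 (\<lambda>x. FF (Ctt0 r \<sigma>) lam N0 \<epsilon> x - Ctt0 r \<sigma> x) \<le> e"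
  proof (intro exI[of _ "max 1 (A/e)"] conjI allI impI)
    show "0 < max 1 (A/e)" by simp
    fix lam :: real assume lam: "max 1 (A/e) \<le> lam"
    have l1: "lam \<ge> 1" using lam by simp
    have le: "A / e \<le> lam" using lam by simp
    have pw: "\<And>x. x\<in>{0..S0} \<Longrightarrow> (FF (Ctt0 r \<sigma>) lam N0 \<epsilon> x - Ctt0 r \<sigma> x)^2 \<le> (real N0 * M / lam)^2"
    proof -
      fix x assume x: "x \<in> {0..S0}"
      let ?s = "\<Sum>j=1..N0. (lam powi (- int j)) * Ctt0 r \<sigma> ((lam powi (- int j)) * x)"
      have "?s \<le> (\<Sum>j=1..N0. M / lam)"
        using term_bound[OF assms(1,2) _ _ l1] x unfolding M_def by (intro sum_mono) auto
      then have s1: "?s \<le> real N0 * M / lam" by simp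
      have s0: "0 \<le> ?s"
        using term_bound[OF assms(1,2) _ _ l1] x by (intro sum_nonneg) auto
      have "(FF (Ctt0 r \<sigma>) lam N0 \<epsilon> x - Ctt0 r \<sigma> x)^2 = \<epsilon>^2 * ?s^2"
        unfolding FF_def by (simp add: power_mult_distrib)
      also have "\<dots> = ?s^2" using assms(5) by auto
      also have "\<dots> \<le> (real N0 * M / lam)^2" using s0 s1 by (intro power_mono) auto
      finally show "(FF (Ctt0 r \<sigma>) lam N0 \<epsilon> x - Ctt0 r \<sigma> x)^2 \<le> (real N0 * M / lam)^2" .
    qed
    have "L2_norm_sq_on S0 (\<lambda>x. FF (Ctt0 r \<sigma>) lam N0 \<epsilon> x - Ctt0 r \<sigma> x) \<le> S0 * (real N0 * M / lam)^2"
      by (rule L[OF assms(3) pw])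
    also have "\<dots> = A / lam^2" unfolding A_def by (simp add: power_divide)
    also have "\<dots> \<le> A / lam" using A0 l1
      by (intro divide_left_mono) (auto simp: power2_eq_square intro: mult_pos_pos)
    also have "\<dots> \<le> e" using le e l1 by (simp add: divide_simps mult.commute)
    finally show "L2_norm_sq_on S0 (\<lambda>x. FF (Ctt0 r \<sigma>) lam N0 \<epsilon> x - Ctt0 r \<sigma> x) \<le> e" .
  qed
qed
end
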